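(* Let $n,m,p,N\in\mathbb{N}_+$, $B\in\mathbb{R}^{n\times m}$, $C\in\mathbb{R}^{p\times n}$ of full column rank, $x_0\in\mathbb{R}^n$, $r_1,\dots,r_N\in\mathbb{R}^p$, $r_0:=Cx_0$, $\lambda_1,\lambda_2,\lambda_3\ge0$, functions $f_1,f_2,f_3$, and let $\omega^{\rm c}>0$ and $\mathcal{S}\subseteq\{(A,U,\omega)\in\mathbb{R}^{n\times n}\times\mathbb{R}^{m\times N}\times\mathbb{R}_+:\omega=\omega^{\rm c}\}$. Problem (MOPUL) is: minimize $\lambda_1f_1(A)+\lambda_2f_2(U)+\lambda_3f_3(\omega)$ over $(A,U,\omega)$, $U=(u_0,\dots,u_{N-1})$, subject to $x_t=Ax_{t-1}+Bu_{t-1}$ ($t=1,\dots,N$), $y_t=Cx_t$ ($t=0,\dots,N$), $\sum_{t=1}^N\|y_t-r_t\|_2\le\omega$, $(A,U,\omega)\in\mathcal{S}$. Let $\beta>0$ and consider the modified approximation problem (AMOPUL$_\beta$): minimize the same objective over $(A,U,\omega)$ subject to $\sum_{t=1}^N\|CAC^{\dagger}r_{t-1}+CBu_{t-1}-r_t\|_2\le\omega^{\rm c}/\big(\sum_{i=0}^{N-1}\beta^i\big)$ and $(A,U,\omega)\in\mathcal{S}$. If $\|CA^{\rm a}C^{\dagger}\|_2\le\beta$ for every feasible $A^{\rm a}$ of (AMOPUL$_\beta$), then every feasible solution $(A^{\rm a},U^{\rm a})$ (with $\omega=\omega^{\rm c}$) of (AMOPUL$_\beta$) is feasible for (MOPUL),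 and the optimal objective value of (AMOPUL$_\beta$) is an upper bound for the optimal objective value of (MOPUL).
   Context: $C^{\dagger}$ is the Moore–Penrose inverse of $C$; $\|\cdot\|_2$ is the Euclidean norm for vectors and the spectral norm for matrices. In the paper $f_1,f_2,f_3$ and $\mathcal{S}$ are assumed SD representable, though this is not used in the claim. *)

theory Defs
  imports "HOL-Analysis.Analysis"
begin

definition mp_pinv :: "real^'n^'p \<Rightarrow> real^'p^'n" where
  "mp_pinv C = (THE X. C ** X ** C = C \<and> X ** C ** X = X \<and>
                       transpose (C ** X) = C ** X \<and> transpose (X ** C) = X ** C)"

definition spec_norm :: "real^'n^'m \<Rightarrow> real" where
  "spec_norm M = onorm (\<lambda>x. M *v x)"

primrec traj :: "real^'n^'n \<Rightarrow> real^'m^'n \<Rightarrow> real^'n \<Rightarrow> (nat \<Rightarrow> real^'m) \<Rightarrow> nat \<Rightarrow> real^'n" where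
  "traj A B x0 u 0 = x0"
| "traj A B x0 u (Suc t) = A *v traj A B x0 u t + B *v u t"

definition mopul_feasible ::
  "real^'m^'n \<Rightarrow> real^'n^'p \<Rightarrow> real^'n \<Rightarrow> (nat \<Rightarrow> real^'p) \<Rightarrow> nat \<Rightarrow>
   ((real^'n^'n) \<times> (nat \<Rightarrow> real^'m) \<times> real) set \<Rightarrow>
   ((real^'n^'n) \<times> (nat \<Rightarrow> real^'m) \<times> real) set" where
  "mopul_feasible B C x0 r N S =
     {(A, u, \<omega>). (\<Sum>t=1..N. norm (C *v traj A B x0 u t - r t)) \<le> \<omega> \<and> (A, u, \<omega>) \<in> S}"

definition amopul_feasible ::
  "real^'m^'n \<Rightarrow> real^'n^'p \<Rightarrow> (nat \<Rightarrow> real^'p) \<Rightarrow> nat \<Rightarrow> real \<Rightarrow> real \<Rightarrow>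
   ((real^'n^'n) \<times> (nat \<Rightarrow> real^'m) \<times> real) set \<Rightarrow>
   ((real^'n^'n) \<times> (nat \<Rightarrow> real^'m) \<times> real) set" where
  "amopul_feasible B C r N \<beta> \<omega>c S =
     {(A, u, \<omega>). (\<Sum>t=1..N. norm ((C ** A ** mp_pinv C) *v r (t - 1) + (C ** B) *v u (t - 1) - r t))
                    \<le> \<omega>c / (\<Sum>i<N. \<beta> ^ i) \<and> (A, u, \<omega>) \<in> S}"

end

theory Submission
  imports Defs
begin

lemma mp_unique:
  fixes C :: "real^'n^'p"
  assumes "C ** X ** C = C" "X ** C ** X = X" "transpose (C ** X) = C ** X" "transpose (X ** C) = X ** C"
      and "C ** Y ** C = C" "Y ** C ** Y = Y" "transpose (C ** Y) = C ** Y" "transpose (Y ** C) = Y ** C"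
  shows "X = Y"
proof -
  have 1: "C ** X = C ** Y"
  proof -
    have "C ** X = (C ** Y ** C) ** X" using assms(5) by simp
    also have "... = (C ** Y) ** (C ** X)" by (simp add: matrix_mul_assoc)
    also have "... = transpose (C ** Y) ** transpose (C ** X)" using assms(3,7) by simp
    also have "... = transpose ((C ** X) ** (C ** Y))" by (simp add: matrix_transpose_mul)
    also have "(C ** X) ** (C ** Y) = C ** Y" using assms(1) by (simp add: matrix_mul_assoc)
    finally show ?thesis using assms(7) by simp
  qed
  have 2: "X ** C = Y ** C"
  proof -
    have "X ** C = X ** (C ** Y ** C)" using assms(5) by simp
    also have "... = (X ** C) ** (Y ** C)" by (simp add: matrix_mul_assoc)
    also have "... = transpose (X ** C) ** transpose (Y ** C)" using assms(4,8) by simp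
    also have "... = transpose ((Y ** C) ** (X ** C))" by (simp add: matrix_transpose_mul)
    also have "(Y ** C) ** (X ** C) = Y ** C" using assms(1) by (metis matrix_mul_assoc)
    finally show ?thesis using assms(8) by simp
  qed
  have "X = X ** C ** X" using assms(2) by simp
  also have "... = X ** (C ** Y)" using 1 by (metis matrix_mul_assoc)
  also have "... = Y ** C ** Y" using 2 by (metis matrix_mul_assoc)
  finally show ?thesis using assms(6) by simp
qed

lemma mp_left_inv:
  fixes C :: "real^'n^'p"
  assumes "rank C = CARD('n)"
  shows "mp_pinv C ** C = mat 1"
proof -
  define G where "G = transpose C ** C"
  have ker: "\<forall>x. G *v x = 0 \<longrightarrow> x = 0"
  proof (intro allI impI)
    fix x assume x0: "G *v x = 0"
    have "inner (C *v x) (C *v x) = inner ((C *v x) v* C) x" by (simp add: dot_lmul_matrix)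
    also have "(C *v x) v* C = G *v x" by (simp add: G_def matrix_vector_mul_assoc[symmetric])
    finally have "inner (C *v x) (C *v x) = 0" using x0 by simp
    hence "C *v x = 0" by simp
    moreover have "inj ((*v) C)" using assms full_rank_injective by blast
    ultimately show "x = 0" by (simp add: inj_on_def)
  qed
  then obtain H where HG: "H ** G = mat 1" using matrix_left_invertible_ker by blast
  have Gs: "transpose G = G" by (simp add: G_def matrix_transpose_mul)
  have "transpose (H ** G) = mat 1" using HG by simp
  hence GHt: "G ** transpose H = mat 1" by (simp add: matrix_transpose_mul Gs)
  have "transpose H = (H ** G) ** transpose H" using HG by simp
  also have "... = H ** (G ** transpose H)" by (simp add: matrix_mul_assoc)
  also have "... = H" using GHt by simp
  finally have Hs: "transpose H = H" .
  define X where "X = H ** transpose C"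
  have XC: "X ** C = mat 1" using HG by (simp add: X_def G_def matrix_mul_assoc)
  have P: "C ** X ** C = C \<and> X ** C ** X = X \<and> transpose (C ** X) = C ** X \<and> transpose (X ** C) = X ** C"
  proof (intro conjI)
    have "C ** X ** C = C ** (X ** C)" by (simp only: matrix_mul_assoc)
    thus "C ** X ** C = C" using XC by simp
    show "X ** C ** X = X" using XC by simp
    show "transpose (C ** X) = C ** X" using Hs by (simp add: X_def matrix_transpose_mul matrix_mul_assoc)
    show "transpose (X ** C) = X ** C" using XC by simp
  qed
  have "mp_pinv C = X"
    unfolding mp_pinv_def
  proof (rule the_equality)
    show "C ** X ** C = C \<and> X ** C ** X = X \<and> transpose (C ** X) = C ** X \<and> transpose (X ** C) = X ** C"
      by (rule P)
    fix Y assume Y: "C ** Y ** C = C \<and> Y ** C ** Y = Y \<and> transpose (C ** Y) = C ** Y \<and> transpose (Y ** C) = Y ** C"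
    show "Y = X"
      using Y P apply (elim conjE) apply (rule mp_unique[of C Y X]) apply assumption+ done
  qed
  thus ?thesis using XC by simp
qed

lemma sum_bound:
  fixes a b :: "nat \<Rightarrow> real" and \<beta> :: real
  assumes "a 0 = 0" "\<And>t. a (Suc t) \<le> b (Suc t) + \<beta> * a t" "\<And>t. b t \<ge> 0" "\<beta> \<ge> 0"
  shows "(\<Sum>t=1..n. a t) \<le> (\<Sum>i<n. \<beta> ^ i) * (\<Sum>t=1..n. b t)"
proof (induction n)
  case 0 then show ?case by simp
next
  case (Suc n)
  have sh: "(\<Sum>t=1..Suc m. a (t - 1)) = (\<Sum>t=1..m. a t)" for m
    by (induction m) (simp_all add: assms(1))
  have "(\<Sum>t=1..Suc n. a t) = (\<Sum>t=1..Suc n. a (Suc (t - 1)))"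
    by (rule sum.cong) auto
  also have "... \<le> (\<Sum>t=1..Suc n. b (Suc (t - 1)) + \<beta> * a (t - 1))"
    by (rule sum_mono) (rule assms(2))
  also have "... = (\<Sum>t=1..Suc n. b t) + \<beta> * (\<Sum>t=1..n. a t)"
  proof -
    have "(\<Sum>t=1..Suc n. b (Suc (t - 1))) = (\<Sum>t=1..Suc n. b t)" by (rule sum.cong) auto
    moreover have "(\<Sum>t=1..Suc n. b (Suc (t - 1)) + \<beta> * a (t - 1))
       = (\<Sum>t=1..Suc n. b (Suc (t - 1))) + \<beta> * (\<Sum>t=1..Suc n. a (t - 1))"
      by (simp only: sum.distrib sum_distrib_left)
    ultimately show ?thesis by (simp only: sh)
  qed
  also have "... \<le> (\<Sum>t=1..Suc n. b t) + \<beta> * ((\<Sum>i<n. \<beta> ^ i) * (\<Sum>t=1..n. b t))"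
    using Suc.IH assms(4) by (simp add: mult_left_mono del: sum.cl_ivl_Suc)
  also have "... \<le> (\<Sum>t=1..Suc n. b t) + \<beta> * ((\<Sum>i<n. \<beta> ^ i) * (\<Sum>t=1..Suc n. b t))"
  proof -
    have "(\<Sum>t=1..n. b t) \<le> (\<Sum>t=1..Suc n. b t)" using assms(3) by simp
    moreover have "0 \<le> \<beta> * (\<Sum>i<n. \<beta> ^ i)" using assms(4) by (simp add: sum_nonneg)
    ultimately show ?thesis by (metis add_left_mono mult.assoc mult_left_mono)
  qed
  also have "... = (1 + \<beta> * (\<Sum>i<n. \<beta> ^ i)) * (\<Sum>t=1..Suc n. b t)"
    by (simp add: algebra_simps del: sum.cl_ivl_Suc)
  also have "1 + \<beta> * (\<Sum>i<n. \<beta> ^ i) = (\<Sum>i<Suc n. \<beta> ^ i)"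
    by (simp add: sum.lessThan_Suc_shift sum_distrib_left del: sum.lessThan_Suc)
  finally show ?case .
qed

theorem theorem3:
  fixes B :: "real^'m^'n" and C :: "real^'n^'p" and x0 :: "real^'n"
    and r :: "nat \<Rightarrow> real^'p" and N :: nat
    and lam1 lam2 lam3 \<omega>c \<beta> :: real
    and f1 :: "real^'n^'n \<Rightarrow> real" and f2 :: "(nat \<Rightarrow> real^'m) \<Rightarrow> real" and f3 :: "real \<Rightarrow> real"
    and S :: "((real^'n^'n) \<times> (nat \<Rightarrow> real^'m) \<times> real) set"
  assumes "N \<ge> 1"
    and "rank C = CARD('n)"
    and "r 0 = C *v x0"
    and "lam1 \<ge> 0" and "lam2 \<ge> 0" and "lam3 \<ge> 0"
    and "\<omega>c > 0"
    and "S \<subseteq> {(A, u, \<omega>). \<omega> > 0 \<and> \<omega> = \<omega>c}"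
    and "\<beta> > 0"
    and "\<forall>(A, u, \<omega>) \<in> amopul_feasible B C r N \<beta> \<omega>c S. spec_norm (C ** A ** mp_pinv C) \<le> \<beta>"
  shows "amopul_feasible B C r N \<beta> \<omega>c S \<subseteq> mopul_feasible B C x0 r N S
    \<and> (INF (A, u, \<omega>) \<in> mopul_feasible B C x0 r N S. ereal (lam1 * f1 A + lam2 * f2 u + lam3 * f3 \<omega>))
      \<le> (INF (A, u, \<omega>) \<in> amopul_feasible B C r N \<beta> \<omega>c S. ereal (lam1 * f1 A + lam2 * f2 u + lam3 * f3 \<omega>))"
proof -
  have sub: "amopul_feasible B C r N \<beta> \<omega>c S \<subseteq> mopul_feasible B C x0 r N S"
  proof
    fix z assume z: "z \<in> amopul_feasible B C r N \<beta> \<omega>c S"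
    obtain A u \<omega> where zz: "z = (A, u, \<omega>)" by (cases z) auto
    define M where "M = C ** A ** mp_pinv C"
    define G where "G = (\<Sum>i<N. \<beta> ^ i)"
    define d where "d t = M *v r (t - 1) + (C ** B) *v u (t - 1) - r t" for t
    define e where "e t = C *v traj A B x0 u t - r t" for t
    have Gp: "G > 0"
    proof -
      have "G = (\<Sum>i<Suc (N - 1). \<beta> ^ i)" using assms(1) by (simp add: G_def)
      also have "... = 1 + (\<Sum>i<N - 1. \<beta> ^ Suc i)" by (simp only: sum.lessThan_Suc_shift) simp
      also have "... > 0" using assms(9) by (simp add: add_pos_nonneg sum_nonneg)
      finally show ?thesis .
    qed
    have inS: "(A, u, \<omega>) \<in> S" and dsum: "(\<Sum>t=1..N. norm (d t)) \<le> \<omega>c / G"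
      using z unfolding zz amopul_feasible_def d_def M_def G_def by auto
    have om: "\<omega> = \<omega>c" using inS assms(8) by auto
    have spec: "spec_norm M \<le> \<beta>" using assms(10) z unfolding zz M_def by auto
    have Mb: "norm (M *v v) \<le> \<beta> * norm v" for v
    proof -
      have "norm (M *v v) \<le> spec_norm M * norm v"
        unfolding spec_norm_def by (rule onorm) simp
      also have "... \<le> \<beta> * norm v" using spec by (simp add: mult_right_mono)
      finally show ?thesis .
    qed
    have L: "mp_pinv C ** C = mat 1" by (rule mp_left_inv[OF assms(2)])
    have rec: "e (Suc t) = d (Suc t) + M *v e t" for t
    proof -
      have "M *v (C *v traj A B x0 u t) = (C ** A) *v traj A B x0 u t"
        unfolding M_def by (metis L matrix_mul_assoc matrix_mul_rid matrix_vector_mul_assoc)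
      thus ?thesis
        by (simp add: e_def d_def matrix_vector_right_distrib matrix_vector_mult_diff_distrib
                      matrix_vector_mul_assoc algebra_simps)
    qed
    have e0: "e 0 = 0" using assms(3) by (simp add: e_def)
    have "(\<Sum>t=1..N. norm (e t)) \<le> G * (\<Sum>t=1..N. norm (d t))"
      unfolding G_def
    proof (rule sum_bound[where a="\<lambda>t. norm (e t)"])
      show "norm (e 0) = 0" using e0 by simp
      show "norm (e (Suc t)) \<le> norm (d (Suc t)) + \<beta> * norm (e t)" for t
        using rec[of t] Mb[of "e t"] norm_triangle_ineq[of "d (Suc t)" "M *v e t"] by simp
    qed (use assms(9) in auto)
    also have "... \<le> G * (\<omega>c / G)"
      by (rule mult_left_mono[OF dsum]) (use Gp in simp)
    also have "G * (\<omega>c / G) = \<omega>" using om Gp by simp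
    finally have fin: "(\<Sum>t=1..N. norm (e t)) \<le> \<omega>" .
    have "(\<Sum>t=1..N. norm (C *v traj A B x0 u t - r t)) \<le> \<omega>"
      using fin by (simp only: e_def)
    then show "z \<in> mopul_feasible B C x0 r N S"
      unfolding zz mopul_feasible_def using inS by blast
  qed
  moreover have "(INF (A, u, \<omega>) \<in> mopul_feasible B C x0 r N S. ereal (lam1 * f1 A + lam2 * f2 u + lam3 * f3 \<omega>))
      \<le> (INF (A, u, \<omega>) \<in> amopul_feasible B C r N \<beta> \<omega>c S. ereal (lam1 * f1 A + lam2 * f2 u + lam3 * f3 \<omega>))"
    by (rule INF_superset_mono[OF sub]) simp
  ultimately show ?thesis by blast
qed

end
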